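(* Let $X$ be a fibrewise pointed space over $B$. Then $\mathrm{TC}_B(X)=0$ if and only if $X$ is fibrewise homotopy equivalent to $B$ (where $B$ is regarded as a fibrewise space over itself via the identity).
   Context: A fibrewise space over $B$ is a space $X$ with a map $p_X:X\to B$; fibrewise maps satisfy $p_Y\circ f=p_X$; fibrewise homotopies $H:X\times I\to Y$ satisfy $p_Y(H(x,t))=p_X(x)$, written $\simeq_B$. A fibrewise pointed space is a fibrewise space $X$ with a map $s_X:B\to X$ such that $p_X\circ s_X=1_B$. For a fibrewise map $f:E\to X$, an open $U\subseteq X$ is fibrewise sectional if there is a fibrewise map $s:U\to E$ with $f\circ s\simeq_B$ the inclusion; $\mathrm{secat}_B(f)$ is the least $k$ such that $X$ is covered by $k+1$ such open sets. $X\times_BX=\{(x,y):p_X(x)=p_X(y)\}$; $P_B(X)=\{(b,\alpha)\in B\times X^I: p_X\circ\alpha\equiv b\}$ with projection $(b,\alpha)\mapsto b$; $\Pi_X(b,\alpha)=(\alpha(0),\alpha(1))$; $\mathrm{TC}_B(X):=\mathrm{secat}_B(\Pi_X)$. *)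

theory Defs
  imports "HOL-Analysis.Analysis"
begin

abbreviation unit_interval :: "real topology" where
  "unit_interval \<equiv> top_of_set {0..1}"

definition fw_map :: "'a topology \<Rightarrow> ('a \<Rightarrow> 'b) \<Rightarrow> 'c topology \<Rightarrow> ('c \<Rightarrow> 'b) \<Rightarrow> ('a \<Rightarrow> 'c) \<Rightarrow> bool" where
  "fw_map X pX Y pY f \<longleftrightarrow> continuous_map X Y f \<and> (\<forall>x\<in>topspace X. pY (f x) = pX x)"

definition fw_homotopic :: "'a topology \<Rightarrow> ('a \<Rightarrow> 'b) \<Rightarrow> 'c topology \<Rightarrow> ('c \<Rightarrow> 'b) \<Rightarrow> ('a \<Rightarrow> 'c) \<Rightarrow> ('a \<Rightarrow> 'c) \<Rightarrow> bool" where
  "fw_homotopic X pX Y pY f g \<longleftrightarrow>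
     (\<exists>H. continuous_map (prod_topology X unit_interval) Y H \<and>
          (\<forall>x\<in>topspace X. \<forall>t\<in>{0..1}. pY (H (x, t)) = pX x) \<and>
          (\<forall>x\<in>topspace X. H (x, 0) = f x \<and> H (x, 1) = g x))"

definition fw_homotopy_equivalent :: "'a topology \<Rightarrow> ('a \<Rightarrow> 'b) \<Rightarrow> 'c topology \<Rightarrow> ('c \<Rightarrow> 'b) \<Rightarrow> bool" where
  "fw_homotopy_equivalent X pX Y pY \<longleftrightarrow>
     (\<exists>f g. fw_map X pX Y pY f \<and> fw_map Y pY X pX g \<and>
            fw_homotopic X pX X pX (g \<circ> f) id \<and> fw_homotopic Y pY Y pY (f \<circ> g) id)"

definition fw_pointed :: "'b topology \<Rightarrow> 'a topology \<Rightarrow> ('a \<Rightarrow> 'b) \<Rightarrow> ('b \<Rightarrow> 'a) \<Rightarrow> bool" where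
  "fw_pointed B X p s \<longleftrightarrow> continuous_map X B p \<and> continuous_map B X s \<and>
     (\<forall>b\<in>topspace B. p (s b) = b)"

definition fw_sectional :: "'e topology \<Rightarrow> ('e \<Rightarrow> 'b) \<Rightarrow> 'a topology \<Rightarrow> ('a \<Rightarrow> 'b) \<Rightarrow> ('e \<Rightarrow> 'a) \<Rightarrow> 'a set \<Rightarrow> bool" where
  "fw_sectional E pE X pX f U \<longleftrightarrow> openin X U \<and>
     (\<exists>s. fw_map (subtopology X U) pX E pE s \<and>
          fw_homotopic (subtopology X U) pX X pX (f \<circ> s) id)"

text \<open>Fibrewise sectional category (as an extended natural; \<infinity> if no finite cover exists).\<close>
definition fw_secat :: "'e topology \<Rightarrow> ('e \<Rightarrow> 'b) \<Rightarrow> 'a topology \<Rightarrow> ('a \<Rightarrow> 'b) \<Rightarrow> ('e \<Rightarrow> 'a) \<Rightarrow> enat" where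
  "fw_secat E pE X pX f =
     (INF k \<in> {k. \<exists>U :: nat \<Rightarrow> 'a set. (\<forall>i\<le>k. fw_sectional E pE X pX f (U i)) \<and>
                                     topspace X \<subseteq> (\<Union>i\<le>k. U i)}. enat k)"

text \<open>Compact-open topology on the space of paths I \<rightarrow> X (paths extensional outside [0,1]).\<close>
definition path_fun_space :: "'a topology \<Rightarrow> (real \<Rightarrow> 'a) topology" where
  "path_fun_space X =
     topology_generated_by
       {{\<alpha>. continuous_map unit_interval X \<alpha> \<and> \<alpha> \<in> extensional {0..1} \<and> \<alpha> ` K \<subseteq> U} | K U.
          compactin unit_interval K \<and> openin X U}"

definition fw_path_space :: "'b topology \<Rightarrow> 'a topology \<Rightarrow> ('a \<Rightarrow> 'b) \<Rightarrow> ('b \<times> (real \<Rightarrow> 'a)) topology" where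
  "fw_path_space B X p =
     subtopology (prod_topology B (path_fun_space X)) {(b, \<alpha>). \<forall>t\<in>{0..1}. p (\<alpha> t) = b}"

definition fw_fibre_product :: "'a topology \<Rightarrow> ('a \<Rightarrow> 'b) \<Rightarrow> ('a \<times> 'a) topology" where
  "fw_fibre_product X p = subtopology (prod_topology X X) {(x, y). p x = p y}"

definition fw_Pi :: "'b \<times> (real \<Rightarrow> 'a) \<Rightarrow> 'a \<times> 'a" where
  "fw_Pi = (\<lambda>(b, \<alpha>). (\<alpha> 0, \<alpha> 1))"

definition fw_TC :: "'b topology \<Rightarrow> 'a topology \<Rightarrow> ('a \<Rightarrow> 'b) \<Rightarrow> enat" where
  "fw_TC B X p = fw_secat (fw_path_space B X p) fst (fw_fibre_product X p) (p \<circ> fst) fw_Pi"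

end

theory Submission
  imports Defs
begin

lemma topspace_pfs: "topspace (path_fun_space X) = {\<alpha>. continuous_map unit_interval X \<alpha> \<and> \<alpha> \<in> extensional {0..1}}"
  unfolding path_fun_space_def topology_generated_by_topspace
  apply (rule set_eqI) apply (rule iffI)
   apply blast
  apply (simp)
  apply (rule exI[where x="{\<alpha>. continuous_map unit_interval X \<alpha> \<and> \<alpha> \<in> extensional {0..1}}"])
  apply (rule conjI)
   apply (rule exI[where x="{}"], rule exI[where x="topspace X"]) apply auto
  done

lemma eval_cont: "continuous_map (prod_topology (path_fun_space X) unit_interval) X (\<lambda>(\<alpha>,t). \<alpha> t)"
proof -
  have "openin (prod_topology (path_fun_space X) unit_interval)
          {z \<in> topspace (prod_topology (path_fun_space X) unit_interval). (case z of (\<alpha>,t) \<Rightarrow> \<alpha> t) \<in> V}"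
    if V: "openin X V" for V
  proof (subst openin_subopen, intro ballI)
    fix z assume z: "z \<in> {z \<in> topspace (prod_topology (path_fun_space X) unit_interval). (case z of (\<alpha>,t) \<Rightarrow> \<alpha> t) \<in> V}"
    obtain \<alpha> t where zat: "z = (\<alpha>,t)" by fastforce
    have ca: "continuous_map unit_interval X \<alpha>" and ea: "\<alpha> \<in> extensional {0..1}"
      and t: "t \<in> {0..1}" and at: "\<alpha> t \<in> V"
      using z zat by (auto simp: topspace_pfs)
    have "openin unit_interval {r \<in> {0..1}. \<alpha> r \<in> V}"
      proof -
      have "{r \<in> {0..1}. \<alpha> r \<in> V} = \<alpha> -` V \<inter> topspace unit_interval" by auto
      then show ?thesis using continuous_map_open[OF ca V] by simp
    qed
    then obtain d where d: "d > 0" "\<And>r. r \<in> {0..1} \<Longrightarrow> dist r t < d \<Longrightarrow> \<alpha> r \<in> V"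
      using t at unfolding openin_euclidean_subtopology_iff by force
    define K where "K = cball t (d/2) \<inter> {0..1::real}"
    define N where "N = {0..1::real} \<inter> ball t (d/2)"
    define S where "S = {\<beta>. continuous_map unit_interval X \<beta> \<and> \<beta> \<in> extensional {0..1} \<and> \<beta> ` K \<subseteq> V}"
    have Kc: "compactin unit_interval K"
      unfolding K_def by (auto simp: compactin_subtopology compact_Int_closed)
    have So: "openin (path_fun_space X) S"
      unfolding path_fun_space_def S_def
      by (rule topology_generated_by_Basis) (use Kc V in blast)
    have No: "openin unit_interval N"
      unfolding N_def by (rule openin_open_Int) simp
    have KV: "\<alpha> ` K \<subseteq> V" using d unfolding K_def by (auto simp: dist_commute)
    show "\<exists>T. openin (prod_topology (path_fun_space X) unit_interval) T \<and> z \<in> T \<and>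
           T \<subseteq> {z \<in> topspace (prod_topology (path_fun_space X) unit_interval). (case z of (\<alpha>,t) \<Rightarrow> \<alpha> t) \<in> V}"
    proof (intro exI conjI)
      show "openin (prod_topology (path_fun_space X) unit_interval) (S \<times> N)"
        using So No by (simp add: openin_prod_Times_iff)
      show "z \<in> S \<times> N" using zat ca ea KV t d(1) unfolding S_def N_def by auto
      show "S \<times> N \<subseteq> {z \<in> topspace (prod_topology (path_fun_space X) unit_interval). (case z of (\<alpha>,t) \<Rightarrow> \<alpha> t) \<in> V}"
      proof (clarify)
        fix \<beta> r assume b: "\<beta> \<in> S" and r: "r \<in> N"
        have "r \<in> K" using r unfolding N_def K_def by auto
        then have "\<beta> r \<in> V" using b unfolding S_def by auto
        moreover have "\<beta> \<in> topspace (path_fun_space X)" using b unfolding S_def topspace_pfs by auto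
        moreover have "r \<in> topspace unit_interval" using r unfolding N_def by auto
        ultimately show "(\<beta>, r) \<in> topspace (prod_topology (path_fun_space X) unit_interval) \<and> \<beta> r \<in> V" by simp
      qed
    qed
  qed
  moreover have "(case z of (\<alpha>,t) \<Rightarrow> \<alpha> t) \<in> topspace X" if "z \<in> topspace (prod_topology (path_fun_space X) unit_interval)" for z
    using that by (auto simp: topspace_pfs continuous_map_def)
  ultimately show ?thesis
    unfolding continuous_map by (auto simp: )
qed

lemma expo_cont:
  assumes H: "continuous_map (prod_topology Z unit_interval) X H"
  shows "continuous_map Z (path_fun_space X) (\<lambda>z. restrict (\<lambda>t. H(z,t)) {0..1})"
proof -
  have cz: "continuous_map unit_interval X (restrict (\<lambda>t. H(z,t)) {0..1})" if z: "z \<in> topspace Z" for z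
  proof -
    have "continuous_map unit_interval X (\<lambda>t. H(z,t))"
      using continuous_map_compose[OF continuous_map_pairedI[OF continuous_map_const[THEN iffD2] continuous_map_id] H] z
      by (simp add: o_def)
    then show ?thesis by (rule continuous_map_eq) auto
  qed
  show ?thesis
    unfolding path_fun_space_def
  proof (rule continuous_on_generated_topo)
    show "(\<lambda>z. restrict (\<lambda>t. H(z,t)) {0..1}) ` topspace Z \<subseteq> \<Union>{{\<alpha>. continuous_map unit_interval X \<alpha> \<and> \<alpha> \<in> extensional {0..1} \<and> \<alpha> ` K \<subseteq> U} | K U.
          compactin unit_interval K \<and> openin X U}"
      using topspace_pfs[of X] cz unfolding path_fun_space_def topology_generated_by_topspace by auto
  next
    fix W assume "W \<in> {{\<alpha>. continuous_map unit_interval X \<alpha> \<and> \<alpha> \<in> extensional {0..1} \<and> \<alpha> ` K \<subseteq> U} | K U.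
          compactin unit_interval K \<and> openin X U}"
    then obtain K U where W: "W = {\<alpha>. continuous_map unit_interval X \<alpha> \<and> \<alpha> \<in> extensional {0..1} \<and> \<alpha> ` K \<subseteq> U}"
      and K: "compactin unit_interval K" and U: "openin X U" by blast
    have K01: "K \<subseteq> {0..1}" using compactin_subset_topspace[OF K] by simp
    have eq: "(\<lambda>z. restrict (\<lambda>t. H(z,t)) {0..1}) -` W \<inter> topspace Z = {z \<in> topspace Z. \<forall>t\<in>K. H(z,t) \<in> U}"
    proof -
      have "\<And>z. (restrict (\<lambda>t. H(z,t)) {0..1}) ` K = (\<lambda>t. H(z,t)) ` K" using K01 by auto
      then show ?thesis using cz unfolding W by auto
    qed
    have Wo: "openin (prod_topology Z unit_interval) {w \<in> topspace (prod_topology Z unit_interval). H w \<in> U}"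
      using continuous_map_open[OF H U] by (simp add: vimage_def Int_def conj_commute)
    show "openin Z ((\<lambda>z. restrict (\<lambda>t. H(z,t)) {0..1}) -` W \<inter> topspace Z)"
      unfolding eq
    proof (subst openin_subopen, intro ballI)
      fix z assume z: "z \<in> {z \<in> topspace Z. \<forall>t\<in>K. H(z,t) \<in> U}"
      have "{z} \<times> K \<subseteq> {w \<in> topspace (prod_topology Z unit_interval). H w \<in> U}"
        using z K01 by auto
      from tube_lemma_right[OF Wo K _ this] z obtain U' V where
        UV: "openin Z U'" "openin unit_interval V" "z \<in> U'" "K \<subseteq> V"
        "U' \<times> V \<subseteq> {w \<in> topspace (prod_topology Z unit_interval). H w \<in> U}" by auto
      show "\<exists>T. openin Z T \<and> z \<in> T \<and> T \<subseteq> {z \<in> topspace Z. \<forall>t\<in>K. H(z,t) \<in> U}"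
      proof (intro exI conjI)
        show "openin Z U'" "z \<in> U'" by (fact UV)+
        show "U' \<subseteq> {z \<in> topspace Z. \<forall>t\<in>K. H(z,t) \<in> U}"
          using UV(4,5) openin_subset[OF UV(1)] by blast
      qed
    qed
  qed
qed

definition clamp :: "real \<Rightarrow> real" where "clamp r = max 0 (min 1 r)"

lemma clamp_cont:
  assumes "continuous_map Y euclideanreal q"
  shows "continuous_map Y unit_interval (\<lambda>y. clamp (q y))"
proof -
  have "continuous_map euclideanreal euclideanreal clamp"
    unfolding clamp_def continuous_map_iff_continuous2 by (intro continuous_intros)
  from continuous_map_compose[OF assms this] have "continuous_map Y euclideanreal (\<lambda>y. clamp (q y))"
    by (simp add: o_def)
  then show ?thesis by (simp add: continuous_map_in_subtopology clamp_def image_subset_iff)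
qed

lemma snd_real_cont: "continuous_map (prod_topology Y unit_interval) euclideanreal (\<lambda>w. a * snd w + b)"
proof -
  have "continuous_map (prod_topology Y unit_interval) euclideanreal snd"
    using continuous_map_compose[OF continuous_map_snd continuous_map_from_subtopology[OF continuous_map_id]]
    by (simp add: o_def)
  then show ?thesis by (intro continuous_intros continuous_map_real_mult_left) auto
qed

lemma clamp_id [simp]: "r \<in> {0..1} \<Longrightarrow> clamp r = r" by (auto simp: clamp_def)
lemma clamp_in: "clamp r \<in> {0..1}" by (auto simp: clamp_def)

lemma topspace_F: "topspace (fw_fibre_product X p) = {(x,y). x \<in> topspace X \<and> y \<in> topspace X \<and> p x = p y}"
  unfolding fw_fibre_product_def by auto

lemma cont_F_fst: "continuous_map (fw_fibre_product X p) X fst"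
  unfolding fw_fibre_product_def by (rule continuous_map_from_subtopology[OF continuous_map_fst])
lemma cont_F_snd: "continuous_map (fw_fibre_product X p) X snd"
  unfolding fw_fibre_product_def by (rule continuous_map_from_subtopology[OF continuous_map_snd])

lemma rev_dir:
  assumes "fw_homotopy_equivalent X p B id"
  shows "fw_TC B X p = 0"
proof -
  obtain f g where fm: "fw_map X p B id f" and gm: "fw_map B id X p g"
    and hom: "fw_homotopic X p X p (g \<circ> f) id"
    using assms unfolding fw_homotopy_equivalent_def by blast
  obtain K where Kc: "continuous_map (prod_topology X unit_interval) X K"
    and Kp: "\<And>x t. x \<in> topspace X \<Longrightarrow> t \<in> {0..1} \<Longrightarrow> p (K (x,t)) = p x"
    and K0: "\<And>x. x \<in> topspace X \<Longrightarrow> K (x,0) = g (f x)"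
    and K1: "\<And>x. x \<in> topspace X \<Longrightarrow> K (x,1) = x"
    using hom unfolding fw_homotopic_def by auto
  have fp: "\<And>x. x \<in> topspace X \<Longrightarrow> f x = p x" using fm unfolding fw_map_def by auto
  define F where "F = fw_fibre_product X p"
  define \<Gamma> where "\<Gamma> = (\<lambda>w::(('a\<times>'a)\<times>real). if snd w \<le> 1/2 then K (fst (fst w), clamp ((-2) * snd w + 1))
                                 else K (snd (fst w), clamp (2 * snd w + (-1))))"
  have P1: "continuous_map (prod_topology F unit_interval) X (\<lambda>w. K (fst (fst w), clamp ((-2) * snd w + 1)))"
  proof -
    have "continuous_map (prod_topology F unit_interval) X (\<lambda>w. fst (fst w))"
      using continuous_map_compose[OF continuous_map_fst cont_F_fst[of X p]] unfolding F_def by (simp add: o_def)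
    then have "continuous_map (prod_topology F unit_interval) (prod_topology X unit_interval) (\<lambda>w. (fst (fst w), clamp ((-2) * snd w + 1)))"
      by (intro continuous_map_pairedI clamp_cont snd_real_cont)
    from continuous_map_compose[OF this Kc] show ?thesis by (simp add: o_def)
  qed
  have P2: "continuous_map (prod_topology F unit_interval) X (\<lambda>w. K (snd (fst w), clamp (2 * snd w + (-1))))"
  proof -
    have "continuous_map (prod_topology F unit_interval) X (\<lambda>w. snd (fst w))"
      using continuous_map_compose[OF continuous_map_fst cont_F_snd[of X p]] unfolding F_def by (simp add: o_def)
    then have "continuous_map (prod_topology F unit_interval) (prod_topology X unit_interval) (\<lambda>w. (snd (fst w), clamp (2 * snd w + (-1))))"
      by (intro continuous_map_pairedI clamp_cont snd_real_cont)
    from continuous_map_compose[OF this Kc] show ?thesis by (simp add: o_def)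
  qed
  have sndc: "continuous_map (prod_topology F unit_interval) euclideanreal snd"
    using snd_real_cont[of F 1 0] by simp
  have Gc: "continuous_map (prod_topology F unit_interval) X \<Gamma>"
    unfolding \<Gamma>_def
  proof (rule continuous_map_cases_le[OF sndc continuous_map_const[THEN iffD2]])
    show "continuous_map (subtopology (prod_topology F unit_interval) {x \<in> topspace (prod_topology F unit_interval). snd x \<le> 1/2}) X
          (\<lambda>w. K (fst (fst w), clamp ((-2) * snd w + 1)))"
      by (rule continuous_map_from_subtopology[OF P1])
    show "continuous_map (subtopology (prod_topology F unit_interval) {x \<in> topspace (prod_topology F unit_interval). 1/2 \<le> snd x}) X
          (\<lambda>w. K (snd (fst w), clamp (2 * snd w + (-1))))"
      by (rule continuous_map_from_subtopology[OF P2])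
    fix w assume w: "w \<in> topspace (prod_topology F unit_interval)" "snd w = 1/2"
    then have "fst w \<in> topspace F" by auto
    then have "fst (fst w) \<in> topspace X" "snd (fst w) \<in> topspace X" "p (fst (fst w)) = p (snd (fst w))"
      unfolding F_def topspace_F by auto
    then show "K (fst (fst w), clamp ((-2) * snd w + 1)) = K (snd (fst w), clamp (2 * snd w + (-1)))"
    proof -
      have "(-2) * snd w + 1 = 0" "2 * snd w + (-1) = (0::real)" using w(2) by auto
      then show ?thesis using K0 fp \<open>fst (fst w) \<in> topspace X\<close> \<open>snd (fst w) \<in> topspace X\<close> \<open>p (fst (fst w)) = p (snd (fst w))\<close>
        by (simp del: mult_minus_left)
    qed
  qed auto
  have Gp: "p (\<Gamma> (w,t)) = p (fst w)" if "w \<in> topspace F" "t \<in> {0..1}" for w t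
    using that clamp_in Kp unfolding F_def topspace_F \<Gamma>_def by (auto split: prod.splits)
  define \<sigma> where "\<sigma> = (\<lambda>w. (p (fst w), restrict (\<lambda>t. \<Gamma> (w,t)) {0..1}))"
  have pc: "continuous_map X B p" using fm fp unfolding fw_map_def using continuous_map_eq by blast
  have sc1: "continuous_map F (prod_topology B (path_fun_space X)) \<sigma>"
    unfolding \<sigma>_def
  proof (intro continuous_map_pairedI expo_cont Gc)
    show "continuous_map F B (\<lambda>w. p (fst w))"
      using continuous_map_compose[OF cont_F_fst pc] unfolding F_def by (simp add: o_def)
  qed
  have sc2: "\<sigma> ` topspace F \<subseteq> {(b, \<alpha>). \<forall>t\<in>{0..1}. p (\<alpha> t) = b}"
    unfolding \<sigma>_def using Gp by auto
  have sc: "continuous_map F (fw_path_space B X p) \<sigma>"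
    unfolding fw_path_space_def continuous_map_in_subtopology using sc1 sc2[unfolded image_subset_iff_funcset] by (intro conjI)
  have "fw_sectional (fw_path_space B X p) fst F (p \<circ> fst) fw_Pi (topspace F)"
    unfolding fw_sectional_def
  proof (intro conjI exI)
    show "openin F (topspace F)" by simp
    show "fw_map (subtopology F (topspace F)) (p \<circ> fst) (fw_path_space B X p) fst \<sigma>"
      unfolding fw_map_def using sc by (simp add: \<sigma>_def)
    show "fw_homotopic (subtopology F (topspace F)) (p \<circ> fst) F (p \<circ> fst) (fw_Pi \<circ> \<sigma>) id"
      unfolding fw_homotopic_def
    proof (intro exI conjI ballI)
      show "continuous_map (prod_topology (subtopology F (topspace F)) unit_interval) F fst"
        by (simp add: continuous_map_fst)
      fix w assume w: "w \<in> topspace (subtopology F (topspace F))"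
      then have "fst w \<in> topspace X" "snd w \<in> topspace X" unfolding F_def topspace_F by auto
      then show "fst (w, 0) = (fw_Pi \<circ> \<sigma>) w"
        unfolding fw_Pi_def \<sigma>_def \<Gamma>_def using K1 by (auto simp: split_beta)
      show "fst (w, 1) = id w" by simp
      fix t show "(p \<circ> fst) (fst (w, t)) = (p \<circ> fst) w" by simp
    qed
  qed
  then have "0 \<in> {k. \<exists>U :: nat \<Rightarrow> ('a \<times> 'a) set. (\<forall>i\<le>k. fw_sectional (fw_path_space B X p) fst F (p \<circ> fst) fw_Pi (U i)) \<and>
                                     topspace F \<subseteq> (\<Union>i\<le>k. U i)}"
    by (intro CollectI exI[where x="\<lambda>_. topspace F"]) auto
  then have "fw_TC B X p \<le> enat 0"
    unfolding fw_TC_def fw_secat_def F_def by (rule INF_lower)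
  then show ?thesis by (simp flip: zero_enat_def)
qed

lemma fwd_dir:
  fixes B :: "'b topology" and X :: "'a topology" and p :: "'a \<Rightarrow> 'b" and s :: "'b \<Rightarrow> 'a"
  assumes pt: "fw_pointed B X p s" and tc: "fw_TC B X p = 0"
  shows "fw_homotopy_equivalent X p B id"
proof -
  have pc: "continuous_map X B p" and scont: "continuous_map B X s"
    and ps: "\<And>b. b \<in> topspace B \<Longrightarrow> p (s b) = b"
    using pt unfolding fw_pointed_def by auto
  define F where "F = fw_fibre_product X p"
  define P where "P = fw_path_space B X p"
  define Ks where "Ks = {k. \<exists>U :: nat \<Rightarrow> ('a \<times> 'a) set. (\<forall>i\<le>k. fw_sectional P fst F (p \<circ> fst) fw_Pi (U i)) \<and>
                                     topspace F \<subseteq> (\<Union>i\<le>k. U i)}"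
  have "0 \<in> Ks"
  proof (rule ccontr)
    assume "0 \<notin> Ks"
    then have "\<forall>k\<in>Ks. enat 1 \<le> enat k" by (metis Suc_leI enat_ord_simps(1) gr0I One_nat_def)
    then have "enat 1 \<le> (INF k\<in>Ks. enat k)" by (simp add: le_INF_iff)
    moreover have "(INF k\<in>Ks. enat k) = 0" using tc unfolding fw_TC_def fw_secat_def Ks_def F_def P_def .
    ultimately show False by (simp add: zero_enat_def)
  qed
  then obtain U where Usec: "fw_sectional P fst F (p \<circ> fst) fw_Pi (U 0)" and Ucov: "topspace F \<subseteq> U 0"
    unfolding Ks_def by auto
  have "U 0 \<subseteq> topspace F" using Usec unfolding fw_sectional_def by (auto dest: openin_subset)
  with Ucov have U0: "subtopology F (U 0) = F" by (metis subset_antisym subtopology_topspace)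
  obtain \<sigma> where \<sigma>m: "fw_map F (p \<circ> fst) P fst \<sigma>" and \<sigma>h: "fw_homotopic F (p \<circ> fst) F (p \<circ> fst) (fw_Pi \<circ> \<sigma>) id"
    using Usec unfolding fw_sectional_def U0 by blast
  obtain H where Hc: "continuous_map (prod_topology F unit_interval) F H"
    and Hp: "\<And>w t. w \<in> topspace F \<Longrightarrow> t \<in> {0..1} \<Longrightarrow> p (fst (H (w,t))) = p (fst w)"
    and H0: "\<And>w. w \<in> topspace F \<Longrightarrow> H (w,0) = fw_Pi (\<sigma> w)"
    and H1: "\<And>w. w \<in> topspace F \<Longrightarrow> H (w,1) = w"
    using \<sigma>h unfolding fw_homotopic_def by auto
  have \<sigma>c: "continuous_map F P \<sigma>" and \<sigma>p: "\<And>w. w \<in> topspace F \<Longrightarrow> fst (\<sigma> w) = p (fst w)"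
    using \<sigma>m unfolding fw_map_def by auto
  have \<sigma>t: "\<And>w t. w \<in> topspace F \<Longrightarrow> t \<in> {0..1} \<Longrightarrow> p (snd (\<sigma> w) t) = p (fst w)"
  proof -
    fix w and t :: real assume w: "w \<in> topspace F" and t: "t \<in> {0..1}"
    have "\<sigma> w \<in> topspace P" using continuous_map_funspace[OF \<sigma>c] w by blast
    then show "p (snd (\<sigma> w) t) = p (fst w)" using t \<sigma>p[OF w] unfolding P_def fw_path_space_def by (auto simp: split_beta)
  qed
  define z where "z = (\<lambda>x. (s (p x), x))"
  have zF: "z x \<in> topspace F" if "x \<in> topspace X" for x
  proof -
    have pb: "p x \<in> topspace B" using continuous_map_funspace[OF pc] that by blast
    then have "s (p x) \<in> topspace X" using continuous_map_funspace[OF scont] by blast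
    then show ?thesis using that ps[OF pb] unfolding z_def F_def topspace_F by auto
  qed
  have zc: "continuous_map X F z"
    unfolding F_def fw_fibre_product_def continuous_map_in_subtopology
  proof (intro conjI)
    show "continuous_map X (prod_topology X X) z"
      unfolding z_def by (intro continuous_map_pairedI continuous_map_id[unfolded id_def] continuous_map_compose[OF pc scont, unfolded o_def])
    show "z \<in> topspace X \<rightarrow> {(x, y). p x = p y}"
    proof (rule Pi_I)
      fix x assume "x \<in> topspace X"
      then have "z x \<in> topspace F" by (rule zF)
      then show "z x \<in> {(x, y). p x = p y}" unfolding F_def topspace_F by (simp add: split_beta)
    qed
  qed
  define \<alpha> where "\<alpha> = (\<lambda>x. snd (\<sigma> (z x)))"
  have \<alpha>c: "continuous_map X (path_fun_space X) \<alpha>"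
  proof -
    have "continuous_map P (path_fun_space X) snd"
      unfolding P_def fw_path_space_def by (rule continuous_map_from_subtopology[OF continuous_map_snd])
    from continuous_map_compose[OF continuous_map_compose[OF zc \<sigma>c] this] show ?thesis
      unfolding \<alpha>_def by (simp add: o_def)
  qed
  define G where "G = (\<lambda>w::'a\<times>real. if snd w \<le> 1/3 then fst (H (z (fst w), clamp ((-3) * snd w + 1)))
         else if snd w \<le> 2/3 then \<alpha> (fst w) (clamp (3 * snd w + (-1)))
         else snd (H (z (fst w), clamp (3 * snd w + (-2)))))"
  have sndc: "continuous_map (prod_topology X unit_interval) euclideanreal snd"
    using snd_real_cont[of X 1 0] by simp
  have zfc: "continuous_map (prod_topology X unit_interval) F (\<lambda>w. z (fst w))"
    using continuous_map_compose[OF continuous_map_fst zc] by (simp add: o_def)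
  have Hz: "continuous_map (prod_topology X unit_interval) F (\<lambda>w. H (z (fst w), clamp (a * snd w + b)))" for a b
  proof -
    have "continuous_map (prod_topology X unit_interval) (prod_topology F unit_interval) (\<lambda>w. (z (fst w), clamp (a * snd w + b)))"
      by (intro continuous_map_pairedI zfc clamp_cont snd_real_cont)
    from continuous_map_compose[OF this Hc] show ?thesis by (simp add: o_def)
  qed
  have C1: "continuous_map (prod_topology X unit_interval) X (\<lambda>w. fst (H (z (fst w), clamp ((-3) * snd w + 1))))"
    using continuous_map_compose[OF Hz[of "-3" 1] cont_F_fst[of X p, folded F_def]] by (simp only: o_def)
  have C3: "continuous_map (prod_topology X unit_interval) X (\<lambda>w. snd (H (z (fst w), clamp (3 * snd w + (-2)))))"
    using continuous_map_compose[OF Hz[of 3 "-2"] cont_F_snd[of X p, folded F_def]] by (simp only: o_def)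
  have C2: "continuous_map (prod_topology X unit_interval) X (\<lambda>w. \<alpha> (fst w) (clamp (3 * snd w + (-1))))"
  proof -
    have "continuous_map (prod_topology X unit_interval) (prod_topology (path_fun_space X) unit_interval) (\<lambda>w. (\<alpha> (fst w), clamp (3 * snd w + (-1))))"
      by (intro continuous_map_pairedI clamp_cont snd_real_cont continuous_map_compose[OF continuous_map_fst \<alpha>c, unfolded o_def])
    from continuous_map_compose[OF this eval_cont] show ?thesis by (simp add: o_def)
  qed
  have Gc: "continuous_map (prod_topology X unit_interval) X G"
    unfolding G_def
  proof (rule continuous_map_cases_le[OF sndc continuous_map_const[THEN iffD2]])
    show "continuous_map (subtopology (prod_topology X unit_interval) {x \<in> topspace (prod_topology X unit_interval). snd x \<le> 1/3}) X
          (\<lambda>w. fst (H (z (fst w), clamp ((-3) * snd w + 1))))"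
      by (rule continuous_map_from_subtopology[OF C1])
    have "continuous_map (prod_topology X unit_interval) X (\<lambda>w. if snd w \<le> 2/3 then \<alpha> (fst w) (clamp (3 * snd w + (-1)))
         else snd (H (z (fst w), clamp (3 * snd w + (-2)))))"
    proof (rule continuous_map_cases_le[OF sndc continuous_map_const[THEN iffD2]])
      show "continuous_map (subtopology (prod_topology X unit_interval) {x \<in> topspace (prod_topology X unit_interval). snd x \<le> 2/3}) X
          (\<lambda>w. \<alpha> (fst w) (clamp (3 * snd w + (-1))))"
        by (rule continuous_map_from_subtopology[OF C2])
      show "continuous_map (subtopology (prod_topology X unit_interval) {x \<in> topspace (prod_topology X unit_interval). 2/3 \<le> snd x}) X
          (\<lambda>w. snd (H (z (fst w), clamp (3 * snd w + (-2)))))"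
        by (rule continuous_map_from_subtopology[OF C3])
      fix w assume w: "w \<in> topspace (prod_topology X unit_interval)" "snd w = 2/3"
      then have x: "fst w \<in> topspace X" by auto
      have "3 * snd w + (-1) = 1" "3 * snd w + (-2) = (0::real)" using w(2) by auto
      then show "\<alpha> (fst w) (clamp (3 * snd w + (-1))) = snd (H (z (fst w), clamp (3 * snd w + (-2))))"
        using H0[OF zF[OF x]] unfolding \<alpha>_def fw_Pi_def by (simp add: split_beta)
    qed auto
    then show "continuous_map (subtopology (prod_topology X unit_interval) {x \<in> topspace (prod_topology X unit_interval). 1/3 \<le> snd x}) X
       (\<lambda>w. if snd w \<le> 2/3 then \<alpha> (fst w) (clamp (3 * snd w + (-1)))
         else snd (H (z (fst w), clamp (3 * snd w + (-2)))))"
      by (rule continuous_map_from_subtopology)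
    fix w assume w: "w \<in> topspace (prod_topology X unit_interval)" "snd w = 1/3"
    then have x: "fst w \<in> topspace X" by auto
    have e: "clamp ((-3) * snd w + 1) = 0" "clamp (3 * snd w + (-1)) = 0" "snd w \<le> 2/3" using w(2) by (auto simp: clamp_def)
    show "fst (H (z (fst w), clamp ((-3) * snd w + 1))) = (if snd w \<le> 2/3 then \<alpha> (fst w) (clamp (3 * snd w + (-1)))
         else snd (H (z (fst w), clamp (3 * snd w + (-2)))))"
      unfolding e using H0[OF zF[OF x]] e(3) unfolding \<alpha>_def fw_Pi_def by (simp add: split_beta)
  qed auto
  have Gp: "p (G (x,t)) = p x" if x: "x \<in> topspace X" and t: "t \<in> {0..1}" for x t
  proof -
    have zx: "z x \<in> topspace F" by (rule zF[OF x])
    have pz: "p (fst (z x)) = p x" using zx unfolding z_def F_def topspace_F by auto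
    have A: "p (fst (H (z x, r))) = p x" if "r \<in> {0..1}" for r using Hp[OF zx that] pz by simp
    have B: "p (snd (H (z x, r))) = p x" if "r \<in> {0..1}" for r
    proof -
      have "H (z x, r) \<in> topspace F" using continuous_map_funspace[OF Hc] zx that by auto
      then show ?thesis using A[OF that] unfolding F_def topspace_F by auto
    qed
    have C: "p (\<alpha> x r) = p x" if "r \<in> {0..1}" for r using \<sigma>t[OF zx that] pz unfolding \<alpha>_def by simp
    show ?thesis unfolding G_def using A B C clamp_in by simp
  qed
  show ?thesis
    unfolding fw_homotopy_equivalent_def
  proof (intro exI conjI)
    show "fw_map X p B id p" unfolding fw_map_def using pc by simp
    show "fw_map B id X p s" unfolding fw_map_def using scont ps by simp
    show "fw_homotopic X p X p (s \<circ> p) id"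
      unfolding fw_homotopic_def
    proof (intro exI conjI ballI)
      show "continuous_map (prod_topology X unit_interval) X G" by (rule Gc)
      fix x assume x: "x \<in> topspace X"
      show "G (x, 0) = (s \<circ> p) x" using H1[OF zF[OF x]] unfolding G_def z_def by simp
      show "G (x, 1) = id x" using H1[OF zF[OF x]] unfolding G_def z_def by simp
      fix t assume "t \<in> {0..1::real}" then show "p (G (x, t)) = p x" using Gp x by simp
    qed
    show "fw_homotopic B id B id (p \<circ> s) id"
      unfolding fw_homotopic_def
    proof (intro exI conjI ballI)
      show "continuous_map (prod_topology B unit_interval) B fst" by (simp add: continuous_map_fst)
      fix b assume b: "b \<in> topspace B"
      show "fst (b, 0::real) = (p \<circ> s) b" using ps[OF b] by simp
      show "fst (b, 1::real) = id b" by simp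
      fix t show "id (fst (b, t::real)) = id b" by simp
    qed
  qed
qed

theorem corollary2p7:
  fixes B :: "'b topology" and X :: "'a topology" and p :: "'a \<Rightarrow> 'b" and s :: "'b \<Rightarrow> 'a"
  assumes "fw_pointed B X p s"
  shows "fw_TC B X p = 0 \<longleftrightarrow> fw_homotopy_equivalent X p B id"
  using fwd_dir[OF assms] rev_dir by blast

end
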